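(* Let $\theta=(\theta_1,\theta_2,\theta_3)\in\mathbb R^3\setminus\{0\}$ and let $m$ be a point on the boundary of the cube $[0,1]^3$ such that the billiard word $u=f_\theta(m)$ is well defined. Then $\delta_a(u)$ is a Sturmian word if and only if $\theta_2,\theta_3$ are linearly independent over $\mathbb Q$.
   Context: For $\theta$ and $m$ such that the line $m+\mathbb R\theta$ contains no point with more than one integer coordinate, the billiard word $f_\theta(m)\in\{a,b,c\}^{\mathbb N}$ records, in order, the successive intersections of the half line $m+\mathbb R_+\theta$ with the planes $X=n$ (letter $a$), $Y=n$ (letter $b$), $Z=n$ (letter $c$), $n\in\mathbb Z$ (this is the coding of the billiard trajectory in the unit cube, opposite faces carrying the same letter). $\delta_a$ denotes the map erasing all occurrences of the letter $a$ in a word. *)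

theory Defs
  imports Complex_Main "HOL-Library.Infinite_Set"
begin

text \<open>Letters: a codes the planes X = n, b the planes Y = n, c the planes Z = n.
  Points and directions of R^3 are triples; the coordinate read by a letter:\<close>

datatype letter = A | B | C

fun coord :: "letter \<Rightarrow> real \<times> real \<times> real \<Rightarrow> real" where
  "coord A (x, y, z) = x"
| "coord B (x, y, z) = y"
| "coord C (x, y, z) = z"

definition billiard_well_defined :: "real \<times> real \<times> real \<Rightarrow> real \<times> real \<times> real \<Rightarrow> bool" where
  "billiard_well_defined \<theta> m \<longleftrightarrow>
     (\<forall>t::real. \<forall>i j. i \<noteq> j \<and> coord i m + t * coord i \<theta> \<in> \<int> \<and> coord j m + t * coord j \<theta> \<in> \<int> \<longrightarrow> False)"

definition crossing_times :: "real \<times> real \<times> real \<Rightarrow> real \<times> real \<times> real \<Rightarrow> real set" where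
  "crossing_times \<theta> m = {t. t > 0 \<and> (\<exists>i. coord i m + t * coord i \<theta> \<in> \<int>)}"

definition billiard_word :: "real \<times> real \<times> real \<Rightarrow> real \<times> real \<times> real \<Rightarrow> nat \<Rightarrow> letter" where
  "billiard_word \<theta> m = (\<lambda>n. THE i. \<exists>s::nat \<Rightarrow> real. strict_mono s \<and> range s = crossing_times \<theta> m
       \<and> coord i m + s n * coord i \<theta> \<in> \<int>)"

definition factors :: "(nat \<Rightarrow> 'a) \<Rightarrow> nat \<Rightarrow> 'a list set" where
  "factors w n = {map (\<lambda>i. w (k + i)) [0..<n] | k. True}"

definition sturmian :: "(nat \<Rightarrow> 'a) \<Rightarrow> bool" where
  "sturmian w \<longleftrightarrow> (\<forall>n. finite (factors w n) \<and> card (factors w n) = n + 1)"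

text \<open>delta_a: erase all occurrences of a. The result is infinite iff u has infinitely many
  letters different from a; then it is the word below. A finite word is never Sturmian.\<close>
definition erase_A :: "(nat \<Rightarrow> letter) \<Rightarrow> nat \<Rightarrow> letter" where
  "erase_A u = (\<lambda>n. u (enumerate {k. u k \<noteq> A} n))"

definition erase_A_sturmian :: "(nat \<Rightarrow> letter) \<Rightarrow> bool" where
  "erase_A_sturmian u \<longleftrightarrow> infinite {k. u k \<noteq> A} \<and> sturmian (erase_A u)"

definition Q_lin_indep2 :: "real \<Rightarrow> real \<Rightarrow> bool" where
  "Q_lin_indep2 x y \<longleftrightarrow> (\<forall>p q :: rat. of_rat p * x + of_rat q * y = 0 \<longrightarrow> p = 0 \<and> q = 0)"

definition cube_boundary :: "(real \<times> real \<times> real) set" where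
  "cube_boundary = {m. (\<forall>i. 0 \<le> coord i m \<and> coord i m \<le> 1) \<and> (\<exists>i. coord i m = 0 \<or> coord i m = 1)}"

end

theory Submission
  imports Defs "HOL-Analysis.Kronecker_Approximation_Theorem"
begin

definition mech :: "real \<Rightarrow> real \<Rightarrow> nat \<Rightarrow> letter" where
  "mech g r n = (if \<lfloor>g * (real n + 1) + r\<rfloor> - \<lfloor>g * real n + r\<rfloor> = 1 then C else B)"

lemma floor_step01:
  fixes g x :: real assumes "0 < g" "g < 1"
  shows "\<lfloor>x + g\<rfloor> - \<lfloor>x\<rfloor> \<in> {0, 1}"
proof -
  have "\<lfloor>x\<rfloor> \<le> \<lfloor>x + g\<rfloor>" using assms by (intro floor_mono) simp
  moreover have "\<lfloor>x + g\<rfloor> \<le> \<lfloor>x\<rfloor> + 1"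
    using assms by (metis add_le_cancel_left floor_add_int floor_mono less_le of_int_1 add.commute)
  ultimately show ?thesis by auto
qed

lemma mech_periodic:
  assumes "g = of_int p / of_int q" "q > 0"
  shows "mech g r (n + nat q) = mech g r n"
proof -
  have e: "g * real (nat q) = of_int p" using assms by simp
  have 1: "g * (real (n + nat q) + 1) + r = (g * (real n + 1) + r) + of_int p"
    using e by (simp add: algebra_simps)
  have 2: "g * real (n + nat q) + r = (g * real n + r) + of_int p"
    using e by (simp add: algebra_simps)
  show ?thesis unfolding mech_def 1 2 by simp
qed

lemma mech_periodic_mult:
  assumes "g = of_int p / of_int q" "q > 0"
  shows "mech g r (n + j * nat q) = mech g r n"
proof (induction j)
  case (Suc j)
  have "n + Suc j * nat q = (n + j * nat q) + nat q" by simp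
  then show ?case using mech_periodic[OF assms, of r "n + j * nat q"] Suc by (simp add: add_ac)
qed simp

lemma mech_rational_not_sturmian:
  assumes "g \<in> \<rat>"
  shows "\<not> sturmian (mech g r)"
proof
  assume st: "sturmian (mech g r)"
  obtain p q where pq: "g = of_int p / of_int q" "q > 0"
    using assms by (metis Rats_cases' of_rat_rat)
  let ?Q = "nat q"
  have Qpos: "?Q > 0" using pq by simp
  have "factors (mech g r) ?Q \<subseteq> (\<lambda>k. map (\<lambda>i. mech g r (k + i)) [0..<?Q]) ` {0..<?Q}"
  proof
    fix f assume "f \<in> factors (mech g r) ?Q"
    then obtain k where k: "f = map (\<lambda>i. mech g r (k + i)) [0..<?Q]" unfolding factors_def by auto
    have "k = k mod ?Q + (k div ?Q) * ?Q" by simp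
    then have "\<And>i. mech g r (k + i) = mech g r (k mod ?Q + i)"
      using mech_periodic_mult[OF pq, of r _ "k div ?Q"]
      by (metis add.commute add.left_commute)
    then have "f = map (\<lambda>i. mech g r (k mod ?Q + i)) [0..<?Q]" using k by simp
    moreover have "k mod ?Q \<in> {0..<?Q}" using Qpos by simp
    ultimately show "f \<in> (\<lambda>k. map (\<lambda>i. mech g r (k + i)) [0..<?Q]) ` {0..<?Q}" by blast
  qed
  then have "card (factors (mech g r) ?Q) \<le> ?Q"
    by (metis card_atLeastLessThan card_image_le card_mono finite_atLeastLessThan finite_imageI le_trans minus_nat.diff_0)
  with st show False unfolding sturmian_def by (metis Suc_eq_plus1 not_less_eq_eq order_refl)
qed

definition phi :: "real \<Rightarrow> nat \<Rightarrow> real \<Rightarrow> letter list" where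
  "phi g n x = map (\<lambda>i. if \<lfloor>x + g * (real i + 1)\<rfloor> - \<lfloor>x + g * real i\<rfloor> = 1 then C else B) [0..<n]"

lemma factor_phi:
  "map (\<lambda>i. mech g r (k + i)) [0..<n] = phi g n (frac (g * real k + r))"
proof -
  have "mech g r (k + i) = (if \<lfloor>frac (g * real k + r) + g * (real i + 1)\<rfloor> - \<lfloor>frac (g * real k + r) + g * real i\<rfloor> = 1 then C else B)" for i
  proof -
    let ?F = "\<lfloor>g * real k + r\<rfloor>"
    have 1: "g * (real (k + i) + 1) + r = (frac (g * real k + r) + g * (real i + 1)) + of_int ?F"
      by (simp add: frac_def algebra_simps)
    have 2: "g * real (k + i) + r = (frac (g * real k + r) + g * real i) + of_int ?F"
      by (simp add: frac_def algebra_simps)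
    show ?thesis unfolding mech_def 1 2 floor_add_int by simp
  qed
  then show ?thesis unfolding phi_def by simp
qed

lemma phi_eq_floors:
  assumes g: "0 < g" "g < 1" and x: "0 \<le> x" "x < 1" and x': "0 \<le> x'" "x' < 1"
    and eq: "phi g n x = phi g n x'"
  shows "j \<le> n \<Longrightarrow> \<lfloor>x + g * real j\<rfloor> = \<lfloor>x' + g * real j\<rfloor>"
proof (induction j)
  case 0
  have "\<lfloor>x\<rfloor> = 0" "\<lfloor>x'\<rfloor> = 0" using x x' by (simp_all add: floor_eq_iff) then show ?case by simp
next
  case (Suc j)
  then have jn: "j < n" by simp
  have "phi g n x ! j = phi g n x' ! j" using eq by simp
  then have L: "(\<lfloor>x + g * (real j + 1)\<rfloor> - \<lfloor>x + g * real j\<rfloor> = 1) = (\<lfloor>x' + g * (real j + 1)\<rfloor> - \<lfloor>x' + g * real j\<rfloor> = 1)"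
    using jn unfolding phi_def by (auto split: if_splits)
  have "x + g * (real j + 1) = (x + g * real j) + g" "x' + g * (real j + 1) = (x' + g * real j) + g"
    by (simp_all add: algebra_simps)
  then have d1: "\<lfloor>x + g * (real j + 1)\<rfloor> - \<lfloor>x + g * real j\<rfloor> \<in> {0,1}"
    and d2: "\<lfloor>x' + g * (real j + 1)\<rfloor> - \<lfloor>x' + g * real j\<rfloor> \<in> {0,1}"
    using floor_step01[OF g, of "x + g * real j"] floor_step01[OF g, of "x' + g * real j"] by (simp_all add: add.assoc)
  have IH: "\<lfloor>x + g * real j\<rfloor> = \<lfloor>x' + g * real j\<rfloor>" using Suc by simp
  have "\<lfloor>x + g * (real j + 1)\<rfloor> = \<lfloor>x' + g * (real j + 1)\<rfloor>"
    using L d1 d2 IH by auto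
  then show ?case by (simp add: add.commute)
qed

lemma floors_phi_eq:
  assumes "\<And>j. j \<le> n \<Longrightarrow> \<lfloor>x + g * real j\<rfloor> = \<lfloor>x' + g * real j\<rfloor>"
  shows "phi g n x = phi g n x'"
proof -
  have "\<lfloor>x + g * (real i + 1)\<rfloor> = \<lfloor>x' + g * (real i + 1)\<rfloor>" if "i < n" for i
    using assms[of "Suc i"] that by (simp add: add.commute)
  moreover have "\<lfloor>x + g * real i\<rfloor> = \<lfloor>x' + g * real i\<rfloor>" if "i < n" for i
    using assms[of i] that by simp
  ultimately show ?thesis unfolding phi_def by (intro map_cong) auto
qed

lemma floor_jump:
  fixes x x' c :: real
  assumes "0 \<le> x" "x \<le> x'" "x' < 1"
  shows "\<lfloor>x + c\<rfloor> \<noteq> \<lfloor>x' + c\<rfloor> \<longleftrightarrow> x < frac (- c) \<and> frac (- c) \<le> x'"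
proof
  assume ne: "\<lfloor>x + c\<rfloor> \<noteq> \<lfloor>x' + c\<rfloor>"
  have "\<lfloor>x + c\<rfloor> \<le> \<lfloor>x' + c\<rfloor>" using assms by (intro floor_mono) simp
  with ne have lt: "\<lfloor>x + c\<rfloor> < \<lfloor>x' + c\<rfloor>" by simp
  define K where "K = \<lfloor>x' + c\<rfloor>"
  have K1: "x + c < of_int K"
    using lt unfolding K_def by (metis floor_less_iff less_le_not_le)
  have K2: "of_int K \<le> x' + c" unfolding K_def by simp
  have "frac (- c) = of_int K - c"
    unfolding frac_unique_iff using K1 K2 assms by auto
  then show "x < frac (- c) \<and> frac (- c) \<le> x'" using K1 K2 by simp
next
  assume a: "x < frac (- c) \<and> frac (- c) \<le> x'"
  define M where "M = - \<lfloor>- c\<rfloor>"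
  have fc: "frac (- c) = of_int M - c" unfolding M_def frac_def by simp
  have "x + c < of_int M" using a fc by simp
  then have "\<lfloor>x + c\<rfloor> < M" by (simp add: floor_less_iff)
  moreover have "of_int M \<le> x' + c" using a fc by simp
  then have "M \<le> \<lfloor>x' + c\<rfloor>" by (simp add: le_floor_iff)
  ultimately show "\<lfloor>x + c\<rfloor> \<noteq> \<lfloor>x' + c\<rfloor>" by simp
qed

lemma Rats_from_int_mult:
  fixes g :: real assumes "g * real j \<in> \<int>" "j > 0" shows "g \<in> \<rat>"
proof -
  obtain z where "g * real j = of_int z" using assms by (auto elim: Ints_cases)
  then have "g = of_int z / real j" using assms by (simp add: field_simps)
  then show ?thesis by simp
qed

lemma mech_irrational_sturmian:
  assumes gQ: "g \<notin> \<rat>" and g: "0 < g" "g < 1"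
  shows "sturmian (mech g r)"
  unfolding sturmian_def
proof
  fix n
  define bp where "bp j = frac (- (g * real j))" for j
  define D where "D = insert 0 (bp ` {1..n})"
  have bp_pos: "0 < bp j" "bp j < 1" if "j \<ge> 1" for j
  proof -
    have "- (g * real j) \<notin> \<int>"
    proof
      assume "- (g * real j) \<in> \<int>"
      then have "g * real j \<in> \<int>" using minus_in_Ints_iff by blast
      then show False using Rats_from_int_mult[of g j] gQ that by simp
    qed
    then show "0 < bp j" "bp j < 1" unfolding bp_def by (simp_all add: frac_lt_1)
  qed
  have inj_bp: "inj_on bp {1..n}"
  proof (rule inj_onI)
    fix i j assume ij: "i \<in> {1..n}" "j \<in> {1..n}" "bp i = bp j"
    then obtain z where z: "- (g * real i) = - (g * real j) + of_int z"
      unfolding bp_def by (metis frac_eqE)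
    show "i = j"
    proof (rule ccontr)
      assume "i \<noteq> j"
      then consider "i < j" | "j < i" by linarith
      then show False
      proof cases
        case 1
        have "g * real (j - i) = of_int z" using z 1 by (simp add: of_nat_diff algebra_simps)
        then show False using Rats_from_int_mult[of g "j - i"] 1 gQ by simp
      next
        case 2
        have "g * real (i - j) = of_int (- z)" using z 2 by (simp add: of_nat_diff algebra_simps)
        then show False using Rats_from_int_mult[of g "i - j"] 2 gQ by (metis Ints_of_int zero_less_diff)
      qed
    qed
  qed
  have finD: "finite D" unfolding D_def by simp
  have cardD: "card D = n + 1"
  proof -
    have "0 \<notin> bp ` {1..n}" using bp_pos by fastforce
    then have "card D = Suc (card (bp ` {1..n}))" unfolding D_def by simp
    also have "\<dots> = n + 1" using card_image[OF inj_bp] by simp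
    finally show ?thesis .
  qed
  have D_range: "0 \<le> d \<and> d < 1" if "d \<in> D" for d
    using that bp_pos unfolding D_def by fastforce
  have D_bp: "bp j \<in> D" if "1 \<le> j" "j \<le> n" for j
    unfolding D_def using that by simp
  have no_bp: "phi g n x = phi g n d"
    if "0 \<le> d" "d \<le> x" "x < 1" "\<And>j. 1 \<le> j \<Longrightarrow> j \<le> n \<Longrightarrow> \<not> (d < bp j \<and> bp j \<le> x)" for d x
  proof (rule floors_phi_eq)
    fix j assume j: "j \<le> n"
    show "\<lfloor>x + g * real j\<rfloor> = \<lfloor>d + g * real j\<rfloor>"
    proof (cases "j = 0")
      case True
      have "\<lfloor>x\<rfloor> = 0" "\<lfloor>d\<rfloor> = 0" using that by (simp_all add: floor_eq_iff)
      then show ?thesis using True by simp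
    next
      case False
      then show ?thesis using floor_jump[of d x "g * real j"] that(1-3) that(4)[of j] j
        unfolding bp_def by auto
    qed
  qed
  have phi_max: "phi g n x = phi g n (Max {d \<in> D. d \<le> x})" if "0 \<le> x" "x < 1" for x
  proof -
    let ?S = "{d \<in> D. d \<le> x}"
    have S: "finite ?S" "?S \<noteq> {}" using finD that unfolding D_def by auto
    have M: "Max ?S \<in> D" "Max ?S \<le> x" using Max_in[OF S] by auto
    show ?thesis
    proof (rule no_bp)
      show "0 \<le> Max ?S" using D_range M by simp
      show "Max ?S \<le> x" "x < 1" using M that by auto
      fix j assume "1 \<le> j" "j \<le> n"
      then have "bp j \<in> D" by (rule D_bp)
      then show "\<not> (Max ?S < bp j \<and> bp j \<le> x)" using Max_ge[OF S(1)] by force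
    qed
  qed
  have inj_phi: "inj_on (phi g n) D"
  proof -
    have "phi g n d \<noteq> phi g n d'" if dd: "d \<in> D" "d' \<in> D" "d < d'" for d d'
    proof
      assume eq: "phi g n d = phi g n d'"
      have "d' \<noteq> 0" using that D_range by force
      then obtain j where j: "j \<in> {1..n}" "d' = bp j" using dd unfolding D_def by auto
      have "\<lfloor>d + g * real j\<rfloor> \<noteq> \<lfloor>d' + g * real j\<rfloor>"
        using floor_jump[of d d' "g * real j"] D_range dd j unfolding bp_def by auto
      moreover have "\<lfloor>d + g * real j\<rfloor> = \<lfloor>d' + g * real j\<rfloor>"
        using phi_eq_floors[OF g _ _ _ _ eq] D_range dd j by auto
      ultimately show False by simp
    qed
    then show ?thesis unfolding inj_on_def by (metis linorder_neqE)
  qed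
  have realized: "\<exists>k. phi g n (frac (g * real k + r)) = phi g n d" if dD: "d \<in> D" for d
  proof -
    define E where "E = insert 1 {e \<in> D. d < e}"
    have finE: "finite E" "E \<noteq> {}" using finD unfolding E_def by auto
    define \<epsilon> where "\<epsilon> = Min ((\<lambda>e. e - d) ` E)"
    have eps_le: "\<epsilon> \<le> e - d" if "e \<in> E" for e
      unfolding \<epsilon>_def using finE that by (intro Min_le) auto
    have eps_pos: "\<epsilon> > 0"
    proof -
      have "\<epsilon> \<in> (\<lambda>e. e - d) ` E" unfolding \<epsilon>_def using finE by (intro Min_in) auto
      then obtain e where "e \<in> E" "\<epsilon> = e - d" by auto
      then show ?thesis unfolding E_def using D_range[OF dD] by auto
    qed
    have d1: "d + \<epsilon> \<le> 1" using eps_le[of 1] unfolding E_def by simp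
    define a where "a = frac (d + \<epsilon> / 2 - r)"
    have a01: "0 \<le> a" "a \<le> 1" unfolding a_def using frac_lt_1[of "d + \<epsilon> / 2 - r"] by simp_all
    obtain k where "k > 0" and k: "\<bar>frac (real k * g) - a\<bar> < \<epsilon> / 2"
      using Kronecker_approx_1_explicit[OF gQ a01, of "\<epsilon>/2"] eps_pos by auto
    define M where "M = \<lfloor>real k * g\<rfloor> - \<lfloor>d + \<epsilon> / 2 - r\<rfloor>"
    have "frac (real k * g) - a = (g * real k + r - of_int M) - (d + \<epsilon> / 2)"
      unfolding a_def M_def frac_def by (simp add: algebra_simps)
    then have "\<bar>(g * real k + r - of_int M) - (d + \<epsilon> / 2)\<bar> < \<epsilon> / 2" using k by simp
    then have xr: "d < g * real k + r - of_int M \<and> g * real k + r - of_int M < d + \<epsilon>"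
      unfolding abs_less_iff by linarith
    have fx: "frac (g * real k + r) = g * real k + r - of_int M"
      unfolding frac_unique_iff using xr d1 D_range[OF dD] by auto
    show ?thesis
    proof (rule exI[of _ k], rule no_bp)
      show "0 \<le> d" using D_range[OF dD] by simp
      show "d \<le> frac (g * real k + r)" using fx xr by simp
      show "frac (g * real k + r) < 1" by (rule frac_lt_1)
      fix j assume j: "1 \<le> j" "j \<le> n"
      show "\<not> (d < bp j \<and> bp j \<le> frac (g * real k + r))"
      proof
        assume h: "d < bp j \<and> bp j \<le> frac (g * real k + r)"
        then have "bp j \<in> E" unfolding E_def using D_bp[OF j] by simp
        then have "bp j \<ge> d + \<epsilon>" using eps_le by force
        then show False using h fx xr by simp
      qed
    qed
  qed
  have fac: "factors (mech g r) n = phi g n ` D"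
  proof
    show "factors (mech g r) n \<subseteq> phi g n ` D"
    proof
      fix f assume "f \<in> factors (mech g r) n"
      then obtain k where "f = map (\<lambda>i. mech g r (k + i)) [0..<n]" unfolding factors_def by auto
      then have f: "f = phi g n (frac (g * real k + r))" using factor_phi by simp
      let ?x = "frac (g * real k + r)"
      have S: "finite {d \<in> D. d \<le> ?x}" "{d \<in> D. d \<le> ?x} \<noteq> {}"
        using finD by (auto simp: D_def)
      have "Max {d \<in> D. d \<le> ?x} \<in> D" using Max_in[OF S] by simp
      then show "f \<in> phi g n ` D" using f phi_max[of ?x] by (simp add: frac_lt_1)
    qed
  next
    show "phi g n ` D \<subseteq> factors (mech g r) n"
    proof
      fix f assume "f \<in> phi g n ` D"
      then obtain d where "d \<in> D" "f = phi g n d" by auto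
      then obtain k where "f = phi g n (frac (g * real k + r))" using realized by metis
      then have "f = map (\<lambda>i. mech g r (k + i)) [0..<n]" using factor_phi by simp
      then show "f \<in> factors (mech g r) n" unfolding factors_def by auto
    qed
  qed
  show "finite (factors (mech g r) n) \<and> card (factors (mech g r) n) = n + 1"
    using fac finD cardD card_image[OF inj_phi] by simp
qed

lemma strict_mono_range_le:
  fixes s1 s2 :: "nat \<Rightarrow> real"
  assumes m1: "strict_mono s1" and m2: "strict_mono s2" and r: "range s1 \<subseteq> range s2"
    and prev: "\<And>m. m < n \<Longrightarrow> s1 m = s2 m"
  shows "s2 n \<le> s1 n"
proof -
  obtain m where m: "s1 n = s2 m" using r by blast
  show ?thesis
  proof (cases "m < n")
    case True
    then have "s1 n = s1 m" using m prev by simp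
    then have "n = m" using strict_mono_eq[OF m1] by simp
    then show ?thesis using True by simp
  next
    case False
    then have "s2 n \<le> s2 m" using strict_mono_leD[OF m2] by simp
    then show ?thesis using m by simp
  qed
qed

lemma strict_mono_range_unique:
  fixes s1 s2 :: "nat \<Rightarrow> real"
  assumes m1: "strict_mono s1" and m2: "strict_mono s2" and r: "range s1 = range s2"
  shows "s1 = s2"
proof
  fix n show "s1 n = s2 n"
  proof (induction n rule: less_induct)
    case (less n)
    have "s2 n \<le> s1 n" using strict_mono_range_le[OF m1 m2 _ less] r by simp
    moreover have "s1 n \<le> s2 n" using strict_mono_range_le[OF m2 m1 _ ] less r by (metis order_refl)
    ultimately show ?case by simp
  qed
qed

lemma enum_exists:
  fixes T :: "real set"
  assumes inf: "infinite T" and pos: "\<And>t. t \<in> T \<Longrightarrow> 0 < t"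
    and fin: "\<And>R. finite {t \<in> T. t \<le> R}"
  shows "\<exists>s::nat \<Rightarrow> real. strict_mono s \<and> range s = T"
proof -
  define P where "P x m \<longleftrightarrow> m \<in> T \<and> x < m \<and> (\<forall>t\<in>T. x < t \<longrightarrow> m \<le> t)" for x m
  have exP: "\<exists>m. P x m" for x
  proof -
    have "{t \<in> T. x < t} \<noteq> {}"
    proof
      assume "{t \<in> T. x < t} = {}"
      then have "T \<subseteq> {t \<in> T. t \<le> x}" by auto
      then show False using fin[of x] inf finite_subset by blast
    qed
    then obtain t0 where t0: "t0 \<in> T" "x < t0" by auto
    let ?S = "{t \<in> T. x < t \<and> t \<le> t0}"
    have "?S \<subseteq> {t \<in> T. t \<le> t0}" by blast
    then have S1: "finite ?S" using fin[of t0] finite_subset by blast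
    have S2: "?S \<noteq> {}" using t0 by blast
    have m1: "Min ?S \<in> ?S" using Min_in[OF S1 S2] .
    have m2: "Min ?S \<le> t" if "t \<in> T" "x < t" for t
    proof (cases "t \<le> t0")
      case True then show ?thesis using Min_le[OF S1] that by blast
    next
      case False then show ?thesis using m1 by simp
    qed
    have "P x (Min ?S)"
      unfolding P_def using m1 m2 by blast
    then show ?thesis by blast
  qed
  define nx where "nx x = (SOME m. P x m)" for x
  have Pnx: "nx x \<in> T" "x < nx x" "\<And>t. t \<in> T \<Longrightarrow> x < t \<Longrightarrow> nx x \<le> t" for x
  proof -
    have "P x (nx x)" unfolding nx_def using exP by (rule someI_ex)
    then show "nx x \<in> T" "x < nx x" "\<And>t. t \<in> T \<Longrightarrow> x < t \<Longrightarrow> nx x \<le> t"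
      unfolding P_def by blast+
  qed
  define s where "s n = rec_nat (nx 0) (\<lambda>_ y. nx y) n" for n
  have s0: "s 0 = nx 0" and sS: "s (Suc n) = nx (s n)" for n unfolding s_def by simp_all
  have sT: "s n \<in> T" for n
  proof (cases n)
    case 0 then show ?thesis using s0 Pnx(1) by simp
  next
    case (Suc k) then show ?thesis using sS Pnx(1) by simp
  qed
  have smono: "strict_mono s"
  proof (rule strict_monoI_Suc)
    fix n show "s n < s (Suc n)" using sS Pnx(2) by simp
  qed
  have "T \<subseteq> range s"
  proof
    fix t assume tT: "t \<in> T"
    have ex: "\<exists>n. t \<le> s n"
    proof (rule ccontr)
      assume a: "\<not> (\<exists>n. t \<le> s n)"
      have "range s \<subseteq> {u \<in> T. u \<le> t}"
      proof
        fix u assume "u \<in> range s"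
        then obtain n where "u = s n" by blast
        then show "u \<in> {u \<in> T. u \<le> t}" using a sT[of n] by (simp add: not_le less_imp_le)
      qed
      then have "finite (range s)" using fin[of t] finite_subset by blast
      then show False using range_inj_infinite[OF strict_mono_imp_inj_on[OF smono]] by blast
    qed
    define n where "n = (LEAST n. t \<le> s n)"
    have n: "t \<le> s n" unfolding n_def using ex by (rule LeastI_ex)
    have least: "s k < t" if "k < n" for k
      using not_less_Least[of k "\<lambda>n. t \<le> s n"] that unfolding n_def by simp
    show "t \<in> range s"
    proof (cases n)
      case 0
      then have "s n \<le> t" using Pnx(3)[of t 0] s0 tT pos by simp
      then show ?thesis using n by (intro range_eqI[of _ _ n]) simp
    next
      case (Suc k)
      then have skt: "s k < t" using least by simp
      have "s n = nx (s k)" using Suc sS by simp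
      then have "s n \<le> t" using Pnx(3)[OF tT skt] by simp
      then show ?thesis using n by (intro range_eqI[of _ _ n]) simp
    qed
  qed
  moreover have "range s \<subseteq> T" using sT by auto
  ultimately have "range s = T" by (rule subset_antisym[rotated])
  then show ?thesis using smono by (intro exI[of _ s] conjI)
qed

lemma one_coord_step:
  fixes w0 c a b :: real
  assumes c: "c > 0" and ab: "a < b" and none: "\<And>t. a < t \<Longrightarrow> t < b \<Longrightarrow> w0 + t * c \<notin> \<int>"
  shows "\<lfloor>w0 + a * c\<rfloor> \<le> \<lfloor>w0 + b * c\<rfloor>"
    and "\<lfloor>w0 + b * c\<rfloor> \<le> \<lfloor>w0 + a * c\<rfloor> + 1"
    and "\<lfloor>w0 + b * c\<rfloor> = \<lfloor>w0 + a * c\<rfloor> + 1 \<longleftrightarrow> w0 + b * c \<in> \<int>"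
proof -
  have lt: "w0 + a * c < w0 + b * c" using c ab by simp
  then show mono: "\<lfloor>w0 + a * c\<rfloor> \<le> \<lfloor>w0 + b * c\<rfloor>" by (intro floor_mono) simp
  define k where "k = \<lfloor>w0 + a * c\<rfloor> + 1"
  have k1: "w0 + a * c < of_int k" unfolding k_def by linarith
  have k2: "w0 + b * c \<le> of_int k"
  proof (rule ccontr)
    assume "\<not> ?thesis"
    then have kb: "of_int k < w0 + b * c" by simp
    define t where "t = (of_int k - w0) / c"
    have tc: "w0 + t * c = of_int k" unfolding t_def using c by simp
    have "a < t" using k1 c unfolding t_def by (simp add: field_simps)
    moreover have "t < b" using kb c unfolding t_def by (simp add: field_simps)
    ultimately show False using none[of t] tc by simp
  qed
  then show "\<lfloor>w0 + b * c\<rfloor> \<le> \<lfloor>w0 + a * c\<rfloor> + 1" unfolding k_def by linarith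
  show "\<lfloor>w0 + b * c\<rfloor> = \<lfloor>w0 + a * c\<rfloor> + 1 \<longleftrightarrow> w0 + b * c \<in> \<int>"
  proof
    assume "\<lfloor>w0 + b * c\<rfloor> = \<lfloor>w0 + a * c\<rfloor> + 1"
    then have "of_int k \<le> w0 + b * c" unfolding k_def by (metis of_int_floor_le)
    then have "w0 + b * c = of_int k" using k2 by simp
    then show "w0 + b * c \<in> \<int>" by simp
  next
    assume "w0 + b * c \<in> \<int>"
    then obtain z where z: "w0 + b * c = of_int z" by (auto elim: Ints_cases)
    then have "\<lfloor>w0 + a * c\<rfloor> < z" using lt by (simp add: floor_less_iff)
    moreover have "z \<le> k" using k2 z by simp
    ultimately show "\<lfloor>w0 + b * c\<rfloor> = \<lfloor>w0 + a * c\<rfloor> + 1" using z unfolding k_def by simp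
  qed
qed

lemma two_coord_step:
  fixes y0 z0 \<alpha> \<beta> a b :: real
  assumes \<alpha>: "\<alpha> > 0" and \<beta>: "\<beta> > 0" and ab: "a < b"
    and nd: "\<not> (y0 + b * \<alpha> \<in> \<int> \<and> z0 + b * \<beta> \<in> \<int>)"
    and cr: "y0 + b * \<alpha> \<in> \<int> \<or> z0 + b * \<beta> \<in> \<int>"
    and none: "\<And>t. a < t \<Longrightarrow> t < b \<Longrightarrow> \<not> (y0 + t * \<alpha> \<in> \<int> \<or> z0 + t * \<beta> \<in> \<int>)"
  shows "\<lfloor>y0 + b * \<alpha>\<rfloor> + \<lfloor>z0 + b * \<beta>\<rfloor> = \<lfloor>y0 + a * \<alpha>\<rfloor> + \<lfloor>z0 + a * \<beta>\<rfloor> + 1"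
proof -
  note Y = one_coord_step[OF \<alpha> ab, of y0] and Z = one_coord_step[OF \<beta> ab, of z0]
  have nY: "\<And>t. a < t \<Longrightarrow> t < b \<Longrightarrow> y0 + t * \<alpha> \<notin> \<int>" using none by blast
  have nZ: "\<And>t. a < t \<Longrightarrow> t < b \<Longrightarrow> z0 + t * \<beta> \<notin> \<int>" using none by blast
  show ?thesis using Y[OF nY] Z[OF nZ] nd cr by linarith
qed

lemma cut_mech:
  fixes y0 z0 \<alpha> \<beta> :: real and s :: "nat \<Rightarrow> real"
  assumes \<alpha>: "\<alpha> > 0" and \<beta>: "\<beta> > 0"
    and nd: "\<And>t. \<not> (y0 + t * \<alpha> \<in> \<int> \<and> z0 + t * \<beta> \<in> \<int>)"
    and sm: "strict_mono s"
    and rs: "range s = {t. 0 < t \<and> (y0 + t * \<alpha> \<in> \<int> \<or> z0 + t * \<beta> \<in> \<int>)}"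
  shows "\<exists>\<rho>. \<forall>n. (z0 + s n * \<beta> \<in> \<int>) \<longleftrightarrow>
            \<lfloor>\<beta> / (\<alpha> + \<beta>) * (real n + 1) + \<rho>\<rfloor> - \<lfloor>\<beta> / (\<alpha> + \<beta>) * real n + \<rho>\<rfloor> = 1"
proof -
  define F where "F t = \<lfloor>y0 + t * \<alpha>\<rfloor> + \<lfloor>z0 + t * \<beta>\<rfloor>" for t
  define g where "g = \<beta> / (\<alpha> + \<beta>)"
  define \<kappa> where "\<kappa> = (\<alpha> * z0 - \<beta> * y0) / (\<alpha> + \<beta>)"
  have g01: "0 < g" "g < 1" unfolding g_def using \<alpha> \<beta> by (simp_all add: field_simps)
  have sT: "0 < s n \<and> (y0 + s n * \<alpha> \<in> \<int> \<or> z0 + s n * \<beta> \<in> \<int>)" for n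
    using rs by (metis (mono_tags, lifting) mem_Collect_eq rangeI)
  have gap: "\<not> (y0 + t * \<alpha> \<in> \<int> \<or> z0 + t * \<beta> \<in> \<int>)"
    if "0 < t" "a < t" "t < s n" "(\<forall>k<n. s k \<le> a)" for t a n
  proof
    assume "y0 + t * \<alpha> \<in> \<int> \<or> z0 + t * \<beta> \<in> \<int>"
    then have "t \<in> range s" using rs that by simp
    then obtain k where k: "t = s k" by blast
    have "k < n" using that(3) k strict_mono_less[OF sm] by simp
    then show False using that k by force
  qed
  have Fs: "F (s n) = F 0 + int n + 1" for n
  proof (induction n)
    case 0
    have "F (s 0) = F 0 + 1" unfolding F_def
      using two_coord_step[OF \<alpha> \<beta>, of 0 "s 0" y0 z0] sT[of 0] nd gap[of _ 0 0] by simp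
    then show ?case by simp
  next
    case (Suc n)
    have "s n < s (Suc n)" using sm by (simp add: strict_mono_Suc_iff)
    moreover have "\<forall>k<Suc n. s k \<le> s n" using strict_mono_leD[OF sm] by simp
    ultimately have "F (s (Suc n)) = F (s n) + 1" unfolding F_def
      using two_coord_step[OF \<alpha> \<beta>, of "s n" "s (Suc n)" y0 z0] sT[of "Suc n"] sT[of n] nd gap[of _ "s n" "Suc n"]
      by (smt (verit))
    then show ?case using Suc by simp
  qed
  have letter: "(z0 + t * \<beta> \<in> \<int>) \<longleftrightarrow> \<lfloor>g * (of_int (F t) + 1) + \<kappa>\<rfloor> - \<lfloor>g * of_int (F t) + \<kappa>\<rfloor> = 1"
    if cr: "y0 + t * \<alpha> \<in> \<int> \<or> z0 + t * \<beta> \<in> \<int>" for t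
  proof -
    define Y where "Y = y0 + t * \<alpha>"
    define Z where "Z = z0 + t * \<beta>"
    have ident: "Z = g * (Y + Z) + \<kappa>"
    proof -
      have abne: "\<alpha> + \<beta> \<noteq> 0" using \<alpha> \<beta> by simp
      have "g * (Y + Z) + \<kappa> = (\<beta> * (Y + Z) + (\<alpha> * z0 - \<beta> * y0)) / (\<alpha> + \<beta>)"
        unfolding g_def \<kappa>_def by (simp add: add_divide_distrib)
      also have "\<beta> * (Y + Z) + (\<alpha> * z0 - \<beta> * y0) = Z * (\<alpha> + \<beta>)"
        unfolding Y_def Z_def by (simp add: algebra_simps)
      finally show ?thesis using abne by simp
    qed
    define N where "N = F t"
    have N: "of_int N = of_int \<lfloor>Y\<rfloor> + of_int \<lfloor>Z\<rfloor>" unfolding N_def F_def Y_def Z_def by simp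
    show ?thesis
    proof (cases "Z \<in> \<int>")
      case True
      then have Yn: "Y \<notin> \<int>" using nd[of t] unfolding Y_def Z_def by blast
      define fy where "fy = Y - of_int \<lfloor>Y\<rfloor>"
      have fy: "0 < fy" "fy < 1" unfolding fy_def using Yn
        by (metis frac_def frac_gt_0_iff frac_lt_1)+
      obtain j where Zj: "Z = of_int j" using True by (auto elim: Ints_cases)
      have k: "\<kappa> = Z - g * (Y + Z)" using ident by simp
      have "g * of_int N + \<kappa> = g * (of_int \<lfloor>Y\<rfloor> + of_int j) + (of_int j - g * (Y + of_int j))"
        unfolding N k Zj by simp
      also have "\<dots> = of_int j - g * fy" unfolding fy_def by (simp add: algebra_simps)
      finally have e1: "g * of_int N + \<kappa> = of_int j - g * fy" .
      have p: "0 < g * fy" "g * fy < 1"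
        using g01 fy mult_pos_pos[of g fy] mult_strict_mono[of g 1 fy 1] by simp_all
      have f1: "\<lfloor>g * of_int N + \<kappa>\<rfloor> = j - 1"
        using e1 p by (intro floor_unique) simp_all
      have p2: "0 < g * (1 - fy)" "g * (1 - fy) < 1"
        using g01 fy mult_pos_pos[of g "1 - fy"] mult_strict_mono[of g 1 "1 - fy" 1] by simp_all
      have e2: "g * (of_int N + 1) + \<kappa> = of_int j + g * (1 - fy)" using e1 by (simp add: algebra_simps)
      have f2: "\<lfloor>g * (of_int N + 1) + \<kappa>\<rfloor> = j"
        using e2 p2 by (intro floor_unique) simp_all
      show ?thesis using True f1 f2 unfolding N_def Z_def by simp
    next
      case False
      then have Yi: "Y \<in> \<int>" using cr unfolding Y_def Z_def by blast
      define fz where "fz = Z - of_int \<lfloor>Z\<rfloor>"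
      have fz: "0 < fz" "fz < 1" unfolding fz_def using False
        by (metis frac_def frac_gt_0_iff frac_lt_1)+
      obtain i where Yj: "Y = of_int i" using Yi by (auto elim: Ints_cases)
      have k: "\<kappa> = Z - g * (Y + Z)" using ident by simp
      have "g * of_int N + \<kappa> = g * (of_int i + of_int \<lfloor>Z\<rfloor>) + (Z - g * (of_int i + Z))"
        unfolding N k Yj by simp
      also have "\<dots> = of_int \<lfloor>Z\<rfloor> + (1 - g) * fz" unfolding fz_def by (simp add: algebra_simps)
      finally have e1: "g * of_int N + \<kappa> = of_int \<lfloor>Z\<rfloor> + (1 - g) * fz" .
      have p1: "0 < (1 - g) * fz" using g01 fz mult_pos_pos[of "1 - g" fz] by simp
      have p3: "(1 - g) * fz < 1 - g" using mult_strict_left_mono[of fz 1 "1 - g"] fz g01 by simp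
      have f1: "\<lfloor>g * of_int N + \<kappa>\<rfloor> = \<lfloor>Z\<rfloor>"
        by (intro floor_unique) (use e1 p1 p3 g01 in linarith)+
      have e2: "g * (of_int N + 1) + \<kappa> = of_int \<lfloor>Z\<rfloor> + ((1 - g) * fz + g)" using e1 by (simp add: algebra_simps)
      have f2: "\<lfloor>g * (of_int N + 1) + \<kappa>\<rfloor> = \<lfloor>Z\<rfloor>"
        by (intro floor_unique) (use e2 p1 p3 g01 in linarith)+
      show ?thesis using False f1 f2 unfolding N_def Z_def by simp
    qed
  qed
  define \<rho> where "\<rho> = g * (of_int (F 0) + 1) + \<kappa>"
  have "(z0 + s n * \<beta> \<in> \<int>) \<longleftrightarrow> \<lfloor>g * (real n + 1) + \<rho>\<rfloor> - \<lfloor>g * real n + \<rho>\<rfloor> = 1" for n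
  proof -
    have a1: "g * (real n + 1) + \<rho> = g * (of_int (F (s n)) + 1) + \<kappa>"
      unfolding \<rho>_def Fs by (simp add: algebra_simps)
    have a2: "g * real n + \<rho> = g * of_int (F (s n)) + \<kappa>"
      unfolding \<rho>_def Fs by (simp add: algebra_simps)
    show ?thesis unfolding a1 a2 using letter sT[of n] by blast
  qed
  then show ?thesis unfolding g_def by blast
qed

lemma const_not_sturmian: "\<not> sturmian (\<lambda>n. x)"
proof
  assume "sturmian (\<lambda>n. x)"
  then have c: "card (factors (\<lambda>n. x) 2) = 3" unfolding sturmian_def by simp
  have "factors (\<lambda>n. x) 2 = {[x, x]}" unfolding factors_def by (auto simp: upt_rec)
  then show False using c by simp
qed

lemma fin_one:
  fixes w c R :: real
  assumes "c \<noteq> 0"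
  shows "finite {t. 0 < t \<and> t \<le> R \<and> w + t * c \<in> \<int>}"
proof -
  let ?S = "{t. 0 < t \<and> t \<le> R \<and> w + t * c \<in> \<int>}"
  define M where "M = \<lceil>\<bar>w\<bar> + \<bar>R\<bar> * \<bar>c\<bar>\<rceil>"
  have inj: "inj_on (\<lambda>t. w + t * c) ?S" using assms by (auto simp: inj_on_def)
  have "(\<lambda>t. w + t * c) ` ?S \<subseteq> of_int ` {-M..M}"
  proof
    fix x assume "x \<in> (\<lambda>t. w + t * c) ` ?S"
    then obtain t where t: "0 < t" "t \<le> R" "w + t * c \<in> \<int>" "x = w + t * c" by auto
    obtain k where k: "x = of_int k" using t by (auto elim: Ints_cases)
    have "\<bar>t * c\<bar> \<le> \<bar>R\<bar> * \<bar>c\<bar>" using t by (simp add: abs_mult mult_right_mono)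
    then have "\<bar>x\<bar> \<le> \<bar>w\<bar> + \<bar>R\<bar> * \<bar>c\<bar>" using t by linarith
    then have "\<bar>of_int k :: real\<bar> \<le> of_int M" unfolding M_def k by (meson le_of_int_ceiling order_trans)
    then have "\<bar>k\<bar> \<le> M" by linarith
    then have "k \<in> {-M..M}" by (simp add: abs_le_iff)
    then show "x \<in> of_int ` {-M..M}" using k by blast
  qed
  then have "finite ((\<lambda>t. w + t * c) ` ?S)" by (rule finite_subset) simp
  then show ?thesis using finite_image_iff[OF inj] by simp
qed

lemma infinite_one:
  fixes w c :: real
  assumes "c \<noteq> 0"
  shows "infinite {t. 0 < t \<and> w + t * c \<in> \<int>}"
proof -
  define K where "K = \<lceil>\<bar>w\<bar>\<rceil> + 1"
  define n where "n k = (if c > 0 then K + int k else - (K + int k))" for k :: nat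
  define f where "f k = (of_int (n k) - w) / c" for k
  have K: "\<bar>w\<bar> < of_int K" unfolding K_def by linarith
  have "inj f"
  proof (rule injI)
    fix k k' assume "f k = f k'"
    then have "of_int (n k) = (of_int (n k') :: real)" unfolding f_def using assms by (simp add: divide_cancel_right)
    then show "k = k'" unfolding n_def by (auto split: if_splits)
  qed
  moreover have "range f \<subseteq> {t. 0 < t \<and> w + t * c \<in> \<int>}"
  proof
    fix t assume "t \<in> range f"
    then obtain k where t: "t = f k" by auto
    have wc: "w + t * c = of_int (n k)" unfolding t f_def using assms by simp
    have "0 < t"
    proof (cases "c > 0")
      case True
      then have "w < of_int (n k)" using K unfolding n_def by auto
      then show ?thesis unfolding t f_def using True by simp
    next
      case False
      then have c: "c < 0" using assms by simp
      then have "of_int (n k) < w" using K unfolding n_def by auto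
      then show ?thesis unfolding t f_def using c by (simp add: divide_pos_neg divide_neg_neg)
    qed
    then show "t \<in> {t. 0 < t \<and> w + t * c \<in> \<int>}" using wc by simp
  qed
  ultimately show ?thesis using range_inj_infinite infinite_super by blast
qed

lemma QL_iff:
  fixes \<alpha> \<beta> :: real
  assumes "\<alpha> \<noteq> 0" "\<beta> \<noteq> 0"
  shows "Q_lin_indep2 \<alpha> \<beta> \<longleftrightarrow> \<bar>\<beta>\<bar> / (\<bar>\<alpha>\<bar> + \<bar>\<beta>\<bar>) \<notin> \<rat>"
proof -
  have 1: "Q_lin_indep2 \<alpha> \<beta> \<longleftrightarrow> \<alpha> / \<beta> \<notin> \<rat>"
  proof
    assume Q: "Q_lin_indep2 \<alpha> \<beta>"
    show "\<alpha> / \<beta> \<notin> \<rat>"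
    proof
      assume "\<alpha> / \<beta> \<in> \<rat>"
      then obtain r where r: "\<alpha> / \<beta> = of_rat r" by (auto elim: Rats_cases)
      then have "of_rat 1 * \<alpha> + of_rat (- r) * \<beta> = 0" using assms by (simp add: of_rat_minus field_simps)
      then show False using Q unfolding Q_lin_indep2_def by fastforce
    qed
  next
    assume nr: "\<alpha> / \<beta> \<notin> \<rat>"
    show "Q_lin_indep2 \<alpha> \<beta>" unfolding Q_lin_indep2_def
    proof (intro allI impI)
      fix p q :: rat assume e: "of_rat p * \<alpha> + of_rat q * \<beta> = 0"
      show "p = 0 \<and> q = 0"
      proof (cases "p = 0")
        case True then show ?thesis using e assms by simp
      next
        case False
        then have "\<alpha> / \<beta> = of_rat (- q / p)" using e assms
          by (simp add: of_rat_minus of_rat_divide field_simps)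
        then show ?thesis using nr by simp
      qed
    qed
  qed
  have 2: "\<alpha> / \<beta> \<in> \<rat> \<longleftrightarrow> \<bar>\<alpha>\<bar> / \<bar>\<beta>\<bar> \<in> \<rat>"
  proof -
    have "\<bar>\<alpha>\<bar> / \<bar>\<beta>\<bar> = \<bar>\<alpha> / \<beta>\<bar>" by simp
    then consider "\<bar>\<alpha>\<bar> / \<bar>\<beta>\<bar> = \<alpha> / \<beta>" | "\<bar>\<alpha>\<bar> / \<bar>\<beta>\<bar> = - (\<alpha> / \<beta>)" by (metis abs_if)
    then show ?thesis by cases (simp_all add: Rats_minus_iff)
  qed
  have 3: "\<bar>\<alpha>\<bar> / \<bar>\<beta>\<bar> \<in> \<rat> \<longleftrightarrow> \<bar>\<beta>\<bar> / (\<bar>\<alpha>\<bar> + \<bar>\<beta>\<bar>) \<in> \<rat>"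
  proof -
    have e: "\<bar>\<beta>\<bar> / (\<bar>\<alpha>\<bar> + \<bar>\<beta>\<bar>) = 1 / (\<bar>\<alpha>\<bar> / \<bar>\<beta>\<bar> + 1)" using assms by (simp add: field_simps)
    have e2: "\<bar>\<alpha>\<bar> / \<bar>\<beta>\<bar> = 1 / (\<bar>\<beta>\<bar> / (\<bar>\<alpha>\<bar> + \<bar>\<beta>\<bar>)) - 1" using assms by (simp add: field_simps)
    show ?thesis
    proof
      assume "\<bar>\<alpha>\<bar> / \<bar>\<beta>\<bar> \<in> \<rat>" then show "\<bar>\<beta>\<bar> / (\<bar>\<alpha>\<bar> + \<bar>\<beta>\<bar>) \<in> \<rat>" unfolding e by simp
    next
      assume "\<bar>\<beta>\<bar> / (\<bar>\<alpha>\<bar> + \<bar>\<beta>\<bar>) \<in> \<rat>"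
      then have "1 / (\<bar>\<beta>\<bar> / (\<bar>\<alpha>\<bar> + \<bar>\<beta>\<bar>)) - 1 \<in> \<rat>" by (rule Rats_diff[OF Rats_divide[OF Rats_1]]) simp_all
      then show "\<bar>\<alpha>\<bar> / \<bar>\<beta>\<bar> \<in> \<rat>" using e2 by simp
    qed
  qed
  show ?thesis using 1 2 3 by simp
qed

lemma letter_UNIV: "(UNIV :: letter set) = {A, B, C}"
  using letter.exhaust by auto

lemma some_coord_nonzero:
  assumes "\<theta> \<noteq> (0, 0, 0)" shows "\<exists>i. coord i \<theta> \<noteq> 0"
proof -
  obtain a b c where "\<theta> = (a, b, c)" by (rule prod_cases3)
  then show ?thesis using assms by (metis coord.simps)
qed

lemma wd_zero:
  assumes th: "\<theta> \<noteq> (0, 0, 0)" and wd: "billiard_well_defined \<theta> m" and z: "coord i \<theta> = 0"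
  shows "coord i m \<notin> \<int>"
proof
  assume mi: "coord i m \<in> \<int>"
  obtain j where j: "coord j \<theta> \<noteq> 0" using some_coord_nonzero[OF th] by blast
  then have ij: "i \<noteq> j" using z by auto
  define t where "t = - coord j m / coord j \<theta>"
  have "coord j m + t * coord j \<theta> = 0" unfolding t_def using j by simp
  then have "coord j m + t * coord j \<theta> \<in> \<int>" by simp
  moreover have "coord i m + t * coord i \<theta> \<in> \<int>" using mi z by simp
  ultimately show False using wd ij unfolding billiard_well_defined_def by blast
qed

lemma strict_mono_comp_nat:
  fixes s :: "nat \<Rightarrow> real" and e :: "nat \<Rightarrow> nat"
  assumes "strict_mono s" "strict_mono e" shows "strict_mono (s \<circ> e)"
  using assms unfolding strict_mono_def by simp

theorem corollary1:
  fixes \<theta> m :: "real \<times> real \<times> real"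
  assumes "\<theta> \<noteq> (0, 0, 0)"
    and "m \<in> cube_boundary"
    and "billiard_well_defined \<theta> m"
  shows "erase_A_sturmian (billiard_word \<theta> m) \<longleftrightarrow> Q_lin_indep2 (coord B \<theta>) (coord C \<theta>)"
proof -
  note th = assms(1) and wd = assms(3)
  define P where "P i t \<longleftrightarrow> coord i m + t * coord i \<theta> \<in> \<int>" for i t
  have wdP: "\<And>i j t. i \<noteq> j \<Longrightarrow> P i t \<Longrightarrow> P j t \<Longrightarrow> False"
    using wd unfolding billiard_well_defined_def P_def by blast
  have zeroP: "\<And>i t. coord i \<theta> = 0 \<Longrightarrow> \<not> P i t"
    using wd_zero[OF th wd] unfolding P_def by simp
  define T3 where "T3 = crossing_times \<theta> m"
  have T3_def': "T3 = {t. 0 < t \<and> (\<exists>i. P i t)}" unfolding T3_def crossing_times_def P_def by simp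
  have finT3: "finite {t \<in> T3. t \<le> R}" for R
  proof -
    have fi: "finite {t. 0 < t \<and> t \<le> R \<and> P i t}" for i
    proof (cases "coord i \<theta> = 0")
      case True then show ?thesis using zeroP by simp
    next
      case False then show ?thesis using fin_one[OF False, of R "coord i m"] unfolding P_def by simp
    qed
    have "{t \<in> T3. t \<le> R} = (\<Union>i\<in>UNIV. {t. 0 < t \<and> t \<le> R \<and> P i t})" unfolding T3_def' by auto
    moreover have "finite (UNIV :: letter set)" by (simp add: letter_UNIV)
    ultimately show ?thesis using finite_UN_I[of UNIV "\<lambda>i. {t. 0 < t \<and> t \<le> R \<and> P i t}"] fi by simp
  qed
  have infT3: "infinite T3"
  proof -
    obtain i where i: "coord i \<theta> \<noteq> 0" using some_coord_nonzero[OF th] by blast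
    have "{t. 0 < t \<and> P i t} \<subseteq> T3" unfolding T3_def' by auto
    then show ?thesis using infinite_one[OF i, of "coord i m"] infinite_super unfolding P_def by blast
  qed
  obtain s3 :: "nat \<Rightarrow> real" where s3: "strict_mono s3" "range s3 = T3"
    using enum_exists[OF infT3 _ finT3] unfolding T3_def' by blast
  have s3T: "0 < s3 k \<and> (\<exists>i. P i (s3 k))" for k using s3(2) unfolding T3_def' by blast
  define u where "u = billiard_word \<theta> m"
  have bw: "u n = i" if Pi: "P i (s3 n)" for i n
  proof -
    have "u n = (THE i. \<exists>s::nat \<Rightarrow> real. strict_mono s \<and> range s = T3 \<and> P i (s n))"
      unfolding u_def billiard_word_def T3_def P_def by simp
    also have "\<dots> = i"
    proof (rule the_equality)
      show "\<exists>s::nat \<Rightarrow> real. strict_mono s \<and> range s = T3 \<and> P i (s n)" using s3 Pi by blast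
    next
      fix j assume "\<exists>s::nat \<Rightarrow> real. strict_mono s \<and> range s = T3 \<and> P j (s n)"
      then obtain s where s: "strict_mono s" "range s = T3" "P j (s n)" by blast
      have "s = s3" using strict_mono_range_unique[OF s(1) s3(1)] s(2) s3(2) by simp
      then show "j = i" using s(3) Pi wdP by blast
    qed
    finally show ?thesis .
  qed
  have uA: "u k \<noteq> A \<longleftrightarrow> P B (s3 k) \<or> P C (s3 k)" for k
  proof -
    obtain i where i: "P i (s3 k)" using s3T by blast
    show ?thesis
    proof (cases i)
      case A
      then have "\<not> P B (s3 k)" "\<not> P C (s3 k)" using i wdP by blast+
      then show ?thesis using bw[OF i] A by simp
    next
      case B then show ?thesis using bw[OF i] i by simp
    next
      case C then show ?thesis using bw[OF i] i by simp
    qed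
  qed
  have uC: "P C (s3 k) \<Longrightarrow> u k = C" for k using bw by blast
  have uB: "\<not> P C (s3 k) \<Longrightarrow> u k \<noteq> A \<Longrightarrow> u k = B" for k using bw uA by blast
  define T2 where "T2 = {t. 0 < t \<and> (P B t \<or> P C t)}"
  define K where "K = {k. u k \<noteq> A}"
  have s3K: "s3 ` K = T2"
  proof
    show "s3 ` K \<subseteq> T2" unfolding K_def T2_def using uA s3T by auto
    show "T2 \<subseteq> s3 ` K"
    proof
      fix t assume t: "t \<in> T2"
      then have "t \<in> T3" unfolding T2_def T3_def' by auto
      then obtain k where k: "t = s3 k" using s3(2) by blast
      then have "k \<in> K" unfolding K_def using uA t T2_def by auto
      then show "t \<in> s3 ` K" using k by blast
    qed
  qed
  have injs3: "inj_on s3 K" using strict_mono_imp_inj_on[OF s3(1)] inj_on_subset by blast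
  have finK: "finite K \<longleftrightarrow> finite T2" using finite_image_iff[OF injs3] s3K by simp
  have erase: "erase_A u n = (if P C (s3 (enumerate K n)) then C else B)" if "infinite K" for n
  proof -
    have "enumerate K n \<in> K" using enumerate_in_set[OF that] .
    then have "u (enumerate K n) \<noteq> A" unfolding K_def by simp
    then show ?thesis unfolding erase_A_def K_def[symmetric] using uB uC by auto
  qed
  show ?thesis
  proof (cases "coord B \<theta> = 0 \<or> coord C \<theta> = 0")
    case True
    have R: "\<not> Q_lin_indep2 (coord B \<theta>) (coord C \<theta>)"
    proof
      assume Q: "Q_lin_indep2 (coord B \<theta>) (coord C \<theta>)"
      show False
      proof (cases "coord B \<theta> = 0")
        case True
        then have e: "of_rat 1 * coord B \<theta> + of_rat 0 * coord C \<theta> = 0" by simp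
        show False using Q[unfolded Q_lin_indep2_def, rule_format, OF e] by simp
      next
        case False
        then have "coord C \<theta> = 0" using \<open>coord B \<theta> = 0 \<or> coord C \<theta> = 0\<close> by simp
        then have e: "of_rat 0 * coord B \<theta> + of_rat 1 * coord C \<theta> = 0" by simp
        show False using Q[unfolded Q_lin_indep2_def, rule_format, OF e] by simp
      qed
    qed
    have L: "\<not> erase_A_sturmian u"
    proof
      assume E: "erase_A_sturmian u"
      then have infK: "infinite K" unfolding erase_A_sturmian_def K_def by simp
      have "erase_A u = (\<lambda>n. C) \<or> erase_A u = (\<lambda>n. B)"
      proof (cases "coord B \<theta> = 0")
        case True
        have "erase_A u n = C" for n
        proof -
          have "enumerate K n \<in> K" using enumerate_in_set[OF infK] .
          then have "P B (s3 (enumerate K n)) \<or> P C (s3 (enumerate K n))" using uA unfolding K_def by simp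
          then show ?thesis using erase[OF infK] zeroP[OF True] by simp
        qed
        then show ?thesis by auto
      next
        case False
        then have z: "coord C \<theta> = 0" using \<open>coord B \<theta> = 0 \<or> coord C \<theta> = 0\<close> by simp
        have "erase_A u n = B" for n using erase[OF infK] zeroP[OF z] by simp
        then show ?thesis by auto
      qed
      then show False using E const_not_sturmian unfolding erase_A_sturmian_def by metis
    qed
    show ?thesis using R L unfolding u_def by simp
  next
    case False
    then have nB: "coord B \<theta> \<noteq> 0" and nC: "coord C \<theta> \<noteq> 0" by auto
    have infK: "infinite K"
    proof -
      have "{t. 0 < t \<and> P B t} \<subseteq> T2" unfolding T2_def by auto
      then have "infinite T2" using infinite_one[OF nB, of "coord B m"] infinite_super unfolding P_def by blast
      then show ?thesis using finK by simp
    qed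
    define s' where "s' = s3 \<circ> enumerate K"
    have sm': "strict_mono s'" unfolding s'_def
      by (rule strict_mono_comp_nat[OF s3(1) strict_mono_enumerate[OF infK]])
    have rs': "range s' = T2" unfolding s'_def using range_enumerate[OF infK] s3K by (simp only: image_comp[symmetric])
    define \<alpha> where "\<alpha> = \<bar>coord B \<theta>\<bar>"
    define \<beta> where "\<beta> = \<bar>coord C \<theta>\<bar>"
    define y0 where "y0 = (if coord B \<theta> < 0 then - coord B m else coord B m)"
    define z0 where "z0 = (if coord C \<theta> < 0 then - coord C m else coord C m)"
    have PBy: "P B t \<longleftrightarrow> y0 + t * \<alpha> \<in> \<int>" for t
    proof (cases "coord B \<theta> < 0")
      case True
      have "y0 + t * \<alpha> = - (coord B m + t * coord B \<theta>)" unfolding y0_def \<alpha>_def using True by simp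
      then show ?thesis unfolding P_def using minus_in_Ints_iff[of "coord B m + t * coord B \<theta>"] by simp
    next
      case False then show ?thesis unfolding P_def y0_def \<alpha>_def by simp
    qed
    have PCz: "P C t \<longleftrightarrow> z0 + t * \<beta> \<in> \<int>" for t
    proof (cases "coord C \<theta> < 0")
      case True
      have "z0 + t * \<beta> = - (coord C m + t * coord C \<theta>)" unfolding z0_def \<beta>_def using True by simp
      then show ?thesis unfolding P_def using minus_in_Ints_iff[of "coord C m + t * coord C \<theta>"] by simp
    next
      case False then show ?thesis unfolding P_def z0_def \<beta>_def by simp
    qed
    have \<alpha>: "\<alpha> > 0" unfolding \<alpha>_def using nB by simp
    have \<beta>: "\<beta> > 0" unfolding \<beta>_def using nC by simp
    have nd: "\<And>t. \<not> (y0 + t * \<alpha> \<in> \<int> \<and> z0 + t * \<beta> \<in> \<int>)"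
      using wdP[of B C] unfolding PBy PCz by blast
    have rs2: "range s' = {t. 0 < t \<and> (y0 + t * \<alpha> \<in> \<int> \<or> z0 + t * \<beta> \<in> \<int>)}"
      unfolding rs' T2_def PBy PCz ..
    obtain \<rho> where \<rho>: "\<And>n. (z0 + s' n * \<beta> \<in> \<int>) \<longleftrightarrow>
        \<lfloor>\<beta> / (\<alpha> + \<beta>) * (real n + 1) + \<rho>\<rfloor> - \<lfloor>\<beta> / (\<alpha> + \<beta>) * real n + \<rho>\<rfloor> = 1"
      using cut_mech[OF \<alpha> \<beta> nd sm' rs2] by blast
    define g where "g = \<beta> / (\<alpha> + \<beta>)"
    have g01: "0 < g" "g < 1" unfolding g_def using \<alpha> \<beta> by (simp_all add: field_simps)
    have E: "erase_A u = mech g \<rho>"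
    proof
      fix n
      have "erase_A u n = (if P C (s' n) then C else B)" using erase[OF infK] unfolding s'_def by simp
      also have "\<dots> = mech g \<rho> n" unfolding mech_def g_def using \<rho>[of n] PCz by simp
      finally show "erase_A u n = mech g \<rho> n" .
    qed
    have "erase_A_sturmian u \<longleftrightarrow> g \<notin> \<rat>"
      unfolding erase_A_sturmian_def K_def[symmetric] E
      using infK mech_irrational_sturmian[OF _ g01] mech_rational_not_sturmian by blast
    moreover have "Q_lin_indep2 (coord B \<theta>) (coord C \<theta>) \<longleftrightarrow> g \<notin> \<rat>"
      unfolding g_def \<alpha>_def \<beta>_def by (rule QL_iff[OF nB nC])
    ultimately show ?thesis unfolding u_def by simp
  qed
qed

end
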